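(* Let $K$ be a field of characteristic $0$, let $L=\mathcal{L}(x,y)$ be the free Lie algebra over $K$ freely generated by $x,y$, let $\delta$ be the derivation of $L$ with $\delta(x)=0$, $\delta(y)=x$, and $L^\delta=\ker\delta$. Let $f\neq 0$ be an element of $L$ of degree $7$. Then $f\in L^\delta$ if and only if $f$ belongs to the Lie subalgebra of $L$ generated by $x$, $[y,x]$ and $[y,x,x,x,[y,x,y]]-[y,x,x,y,[y,x,x]]$.
   Context: Brackets are left-normed: $[a_1,a_2,\ldots,a_n]=[[\ldots[a_1,a_2],\ldots],a_n]$, and an inner bracket denotes a left-normed element inserted as a single argument. *)

theory Defs
  imports Main
begin

text \<open>Free associative algebra K<x,y>: noncommutative polynomials, represented as
coefficient functions on words over the alphabet bool (False = x, True = y).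
The free Lie algebra L(x,y) is realised (Witt) as the Lie subalgebra of K<x,y>
generated by x and y under the commutator bracket.\<close>

type_synonym 'k ncpoly = "bool list \<Rightarrow> 'k"

definition gen_x :: "'k::field ncpoly" where
  "gen_x w = (if w = [False] then 1 else 0)"

definition gen_y :: "'k::field ncpoly" where
  "gen_y w = (if w = [True] then 1 else 0)"

definition nc_mult :: "'k::field ncpoly \<Rightarrow> 'k ncpoly \<Rightarrow> 'k ncpoly" where
  "nc_mult p q w = (\<Sum>i\<le>length w. p (take i w) * q (drop i w))"

definition lie_br :: "'k::field ncpoly \<Rightarrow> 'k ncpoly \<Rightarrow> 'k ncpoly" where
  "lie_br p q = (\<lambda>w. nc_mult p q w - nc_mult q p w)"

inductive_set lie_span :: "'k::field ncpoly set \<Rightarrow> 'k ncpoly set" for S where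
  gen: "p \<in> S \<Longrightarrow> p \<in> lie_span S"
| zero: "(\<lambda>w. 0) \<in> lie_span S"
| add: "p \<in> lie_span S \<Longrightarrow> q \<in> lie_span S \<Longrightarrow> (\<lambda>w. p w + q w) \<in> lie_span S"
| smult: "p \<in> lie_span S \<Longrightarrow> (\<lambda>w. c * p w) \<in> lie_span S"
| br: "p \<in> lie_span S \<Longrightarrow> q \<in> lie_span S \<Longrightarrow> lie_br p q \<in> lie_span S"

definition free_lie :: "'k::field ncpoly set" where
  "free_lie = lie_span {gen_x, gen_y}"

text \<open>The derivation with delta(x) = 0, delta(y) = x (of K<x,y>, restricting to L):
on a word it sums over all replacements of one letter y by x.  Coefficient form:\<close>
definition delta :: "'k::field ncpoly \<Rightarrow> 'k ncpoly" where
  "delta p u = (\<Sum>i\<in>{i. i < length u \<and> u ! i = False}. p (u[i := True]))"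

definition homog :: "nat \<Rightarrow> 'k::field ncpoly \<Rightarrow> bool" where
  "homog n p \<longleftrightarrow> (\<forall>w. p w \<noteq> 0 \<longrightarrow> length w = n)"

end

theory Submission
  imports Defs
begin

definition sh :: "bool \<Rightarrow> 'k::field ncpoly \<Rightarrow> 'k ncpoly" where
  "sh b p = (\<lambda>w. p (b # w))"

lemma nc_mult_Nil: "nc_mult p q [] = p [] * q []"
  by (simp add: nc_mult_def)

lemma nc_mult_Cons: "nc_mult p q (b # w) = p [] * q (b # w) + nc_mult (sh b p) q w"
  unfolding nc_mult_def sh_def length_Cons sum.atMost_Suc_shift by simp

lemma nc_mult_add_left: "nc_mult (\<lambda>w. p w + q w) r u = nc_mult p r u + nc_mult q r u"
  by (simp add: nc_mult_def algebra_simps sum.distrib)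
lemma nc_mult_add_right: "nc_mult r (\<lambda>w. p w + q w) u = nc_mult r p u + nc_mult r q u"
  by (simp add: nc_mult_def algebra_simps sum.distrib)
lemma nc_mult_diff_left: "nc_mult (\<lambda>w. p w - q w) r u = nc_mult p r u - nc_mult q r u"
  by (simp add: nc_mult_def algebra_simps sum_subtractf)
lemma nc_mult_diff_right: "nc_mult r (\<lambda>w. p w - q w) u = nc_mult r p u - nc_mult r q u"
  by (simp add: nc_mult_def algebra_simps sum_subtractf)
lemma nc_mult_smult_left: "nc_mult (\<lambda>w. c * p w) r u = c * nc_mult p r u"
  by (simp add: nc_mult_def algebra_simps sum_distrib_left)
lemma nc_mult_smult_right: "nc_mult r (\<lambda>w. c * p w) u = c * nc_mult r p u"
  by (simp add: nc_mult_def algebra_simps sum_distrib_left)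
lemma nc_mult_zero_left: "nc_mult (\<lambda>w. 0) r u = 0"
  by (simp add: nc_mult_def)
lemma nc_mult_zero_right: "nc_mult r (\<lambda>w. 0) u = 0"
  by (simp add: nc_mult_def)

lemma sh_nc_mult: "sh b (nc_mult p q) = (\<lambda>w. p [] * sh b q w + nc_mult (sh b p) q w)"
  by (simp add: sh_def nc_mult_Cons fun_eq_iff)

lemma nc_mult_assoc: "nc_mult (nc_mult p q) r u = nc_mult p (nc_mult q r) u"
proof (induction u arbitrary: p q r)
  case Nil
  then show ?case by (simp add: nc_mult_Nil)
next
  case (Cons b u)
  have "nc_mult (nc_mult p q) r (b # u) = nc_mult p q [] * r (b # u) + nc_mult (sh b (nc_mult p q)) r u"
    by (simp add: nc_mult_Cons)
  also have "nc_mult (sh b (nc_mult p q)) r u = p [] * nc_mult (sh b q) r u + nc_mult (nc_mult (sh b p) q) r u"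
    by (simp add: sh_nc_mult nc_mult_add_left nc_mult_smult_left)
  finally show ?case
    by (simp add: nc_mult_Cons nc_mult_Nil Cons.IH algebra_simps)
qed

lemma delta_Nil: "delta p [] = 0"
  by (simp add: delta_def)

lemma delta_Cons: "delta p (b # u) = (if b then 0 else p (True # u)) + delta (sh b p) u"
proof -
  have S: "{i. i < length (b # u) \<and> (b # u) ! i = False} =
      (if b then {} else {0}) \<union> Suc ` {i. i < length u \<and> u ! i = False}"
    by (auto simp: image_def nth_Cons split: nat.splits) (metis Suc_less_eq gr0_implies_Suc nth_Cons_Suc)+
  have F: "finite {i. i < length u \<and> u ! i = False}" by simp
  have D: "(if b then {} else {0}) \<inter> Suc ` {i. i < length u \<and> u ! i = False} = {}" by auto
  have "delta p (b # u) = sum (\<lambda>i. p ((b # u)[i := True])) (if b then {} else {0})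
        + sum (\<lambda>i. p ((b # u)[i := True])) (Suc ` {i. i < length u \<and> u ! i = False})"
    unfolding delta_def S by (rule sum.union_disjoint) (use F D in auto)
  also have "sum (\<lambda>i. p ((b # u)[i := True])) (Suc ` {i. i < length u \<and> u ! i = False})
      = delta (sh b p) u"
    by (simp add: sum.reindex delta_def sh_def)
  finally show ?thesis by simp
qed

lemma delta_add: "delta (\<lambda>w. p w + q w) u = delta p u + delta q u"
  by (simp add: delta_def sum.distrib)
lemma delta_diff: "delta (\<lambda>w. p w - q w) u = delta p u - delta q u"
  by (simp add: delta_def sum_subtractf)
lemma delta_smult: "delta (\<lambda>w. c * p w) u = c * delta p u"
  by (simp add: delta_def sum_distrib_left)
lemma delta_zero: "delta (\<lambda>w. 0) u = 0"
  by (simp add: delta_def)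

lemma sh_delta: "sh b (delta p) = (\<lambda>w. (if b then 0 else p (True # w)) + delta (sh b p) w)"
  by (simp add: sh_def delta_Cons fun_eq_iff)

lemma delta_nc_mult: "delta (nc_mult p q) u = nc_mult (delta p) q u + nc_mult p (delta q) u"
proof (induction u arbitrary: p q)
  case Nil
  then show ?case by (simp add: nc_mult_Nil delta_Nil)
next
  case (Cons b u)
  have A: "delta (nc_mult p q) (b # u) = (if b then 0 else nc_mult p q (True # u))
     + p [] * delta (sh b q) u + nc_mult (delta (sh b p)) q u + nc_mult (sh b p) (delta q) u"
    by (simp add: delta_Cons sh_nc_mult delta_add delta_smult Cons.IH)
  show ?case
  proof (cases b)
    case True
    then show ?thesis unfolding A
      by (simp add: nc_mult_Cons delta_Nil sh_delta delta_Cons algebra_simps)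
  next
    case False
    then show ?thesis unfolding A
      by (simp add: nc_mult_Cons delta_Nil sh_delta delta_Cons nc_mult_add_left algebra_simps sh_def)
  qed
qed

lemma lie_br_add_left: "lie_br (\<lambda>w. p w + q w) r = (\<lambda>w. lie_br p r w + lie_br q r w)"
  by (simp add: lie_br_def fun_eq_iff nc_mult_add_left nc_mult_add_right)
lemma lie_br_add_right: "lie_br r (\<lambda>w. p w + q w) = (\<lambda>w. lie_br r p w + lie_br r q w)"
  by (simp add: lie_br_def fun_eq_iff nc_mult_add_left nc_mult_add_right)
lemma lie_br_diff_left: "lie_br (\<lambda>w. p w - q w) r = (\<lambda>w. lie_br p r w - lie_br q r w)"
  by (simp add: lie_br_def fun_eq_iff nc_mult_diff_left nc_mult_diff_right)
lemma lie_br_diff_right: "lie_br r (\<lambda>w. p w - q w) = (\<lambda>w. lie_br r p w - lie_br r q w)"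
  by (simp add: lie_br_def fun_eq_iff nc_mult_diff_left nc_mult_diff_right)
lemma lie_br_smult_left: "lie_br (\<lambda>w. c * p w) r = (\<lambda>w. c * lie_br p r w)"
  by (simp add: lie_br_def fun_eq_iff nc_mult_smult_left nc_mult_smult_right algebra_simps)
lemma lie_br_smult_right: "lie_br r (\<lambda>w. c * p w) = (\<lambda>w. c * lie_br r p w)"
  by (simp add: lie_br_def fun_eq_iff nc_mult_smult_left nc_mult_smult_right algebra_simps)
lemma lie_br_zero_left: "lie_br (\<lambda>w. 0) r = (\<lambda>w. 0)"
  by (simp add: lie_br_def fun_eq_iff nc_mult_zero_left nc_mult_zero_right)
lemma lie_br_zero_right: "lie_br r (\<lambda>w. 0) = (\<lambda>w. 0)"
  by (simp add: lie_br_def fun_eq_iff nc_mult_zero_left nc_mult_zero_right)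

lemma jacobi: "lie_br p (lie_br q r) = (\<lambda>w. lie_br (lie_br p q) r w - lie_br (lie_br p r) q w)"
proof
  fix w
  show "lie_br p (lie_br q r) w = lie_br (lie_br p q) r w - lie_br (lie_br p r) q w"
    unfolding lie_br_def
    apply (simp only: nc_mult_diff_left nc_mult_diff_right nc_mult_assoc)
    by (simp add: algebra_simps)
qed

lemma delta_lie_br: "delta (lie_br p q) = (\<lambda>w. lie_br (delta p) q w + lie_br p (delta q) w)"
proof
  fix w
  show "delta (lie_br p q) w = lie_br (delta p) q w + lie_br p (delta q) w"
    unfolding lie_br_def
    apply (simp only: delta_diff delta_nc_mult)
    by (simp add: algebra_simps)
qed


lemma delta_gen_x: "delta gen_x = (\<lambda>w. 0)"
proof
  fix u :: "bool list"
  show "delta gen_x u = 0"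
    unfolding delta_def
  proof (rule sum.neutral, rule ballI)
    fix i assume "i \<in> {i. i < length u \<and> u ! i = False}"
    then have i: "i < length u" by simp
    have "u[i := True] \<noteq> [False]"
    proof
      assume e: "u[i := True] = [False]"
      have "u[i := True] ! i = True" using i by simp
      then have "[False] ! i = True" using e by simp
      moreover have "length u = 1" using arg_cong[OF e, of length] by simp
      ultimately show False using i by simp
    qed
    then show "gen_x (u[i := True]) = 0" by (simp add: gen_x_def)
  qed
qed

lemma delta_gen_y: "delta gen_y = gen_x"
proof
  fix u :: "bool list"
  show "delta gen_y u = gen_x u"
  proof (cases u)
    case Nil
    then show ?thesis by (simp add: delta_Nil gen_x_def)
  next
    case (Cons b u')
    have z: "delta (sh b gen_y) u' = 0"
      unfolding delta_def
    proof (rule sum.neutral, rule ballI)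
      fix i assume "i \<in> {i. i < length u' \<and> u' ! i = False}"
      then have "u'[i := True] \<noteq> []" by auto
      then show "sh b gen_y (u'[i := True]) = 0" by (simp add: sh_def gen_y_def)
    qed
    have "delta gen_y u = (if b then 0 else gen_y (True # u'))"
      using z Cons by (simp only: delta_Cons) simp
    then show ?thesis using Cons by (cases b) (simp_all add: gen_x_def gen_y_def)
  qed
qed


lemma lie_br_self: "lie_br p p = (\<lambda>w. 0)"
  by (simp add: lie_br_def)

lemma lie_span_delta:
  assumes "\<And>p. p \<in> S \<Longrightarrow> delta p = (\<lambda>w. 0)" and "q \<in> lie_span S"
  shows "delta q = (\<lambda>w. 0)"
  using assms(2)
proof induction
  case (gen p) then show ?case using assms(1) by simp
next
  case zero then show ?case by (simp add: delta_zero)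
next
  case (add p q) then show ?case by (simp add: delta_add)
next
  case (smult p c) then show ?case by (simp add: delta_smult)
next
  case (br p q) then show ?case by (simp add: delta_lie_br lie_br_zero_left lie_br_zero_right)
qed

datatype tr = Lf | Nd int tr tr

fun lk :: "tr \<Rightarrow> bool list \<Rightarrow> int" where
  "lk Lf w = 0"
| "lk (Nd a l r) [] = a"
| "lk (Nd a l r) (b # w) = lk (if b then r else l) w"

definition evT :: "tr \<Rightarrow> 'k::field ncpoly" where
  "evT t = (\<lambda>w. of_int (lk t w))"

fun addT :: "tr \<Rightarrow> tr \<Rightarrow> tr" where
  "addT Lf t = t"
| "addT (Nd a l r) Lf = Nd a l r"
| "addT (Nd a l r) (Nd b l' r') = Nd (a + b) (addT l l') (addT r r')"

fun smT :: "int \<Rightarrow> tr \<Rightarrow> tr" where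
  "smT c Lf = Lf"
| "smT c (Nd a l r) = Nd (c * a) (smT c l) (smT c r)"

definition pre :: "bool \<Rightarrow> tr \<Rightarrow> tr" where
  "pre b t = (if b then Nd 0 Lf t else Nd 0 t Lf)"

fun mulT :: "tr \<Rightarrow> tr \<Rightarrow> tr" where
  "mulT Lf q = Lf"
| "mulT (Nd a l r) q = addT (smT a q) (addT (pre False (mulT l q)) (pre True (mulT r q)))"

definition brT :: "tr \<Rightarrow> tr \<Rightarrow> tr" where
  "brT p q = addT (mulT p q) (smT (-1) (mulT q p))"

fun dT :: "tr \<Rightarrow> tr" where
  "dT Lf = Lf"
| "dT (Nd a l r) = Nd 0 (addT (dT l) r) (dT r)"

definition letT :: "bool \<Rightarrow> tr" where
  "letT b = pre b (Nd 1 Lf Lf)"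

lemma lk_addT: "lk (addT s t) w = lk s w + lk t w"
  by (induction s t arbitrary: w rule: addT.induct; case_tac w; simp)

lemma lk_smT: "lk (smT c t) w = c * lk t w"
  by (induction t arbitrary: w; case_tac w; simp)

lemma lk_pre: "lk (pre b t) w = (case w of [] \<Rightarrow> 0 | c # w' \<Rightarrow> if c = b then lk t w' else 0)"
  by (cases w) (auto simp: pre_def)

lemma evT_Lf: "evT Lf = (\<lambda>w. 0)"
  by (simp add: evT_def)

lemma evT_Nil: "evT (Nd a l r) [] = of_int a"
  by (simp add: evT_def)

lemma sh_evT: "sh b (evT (Nd a l r)) = evT (if b then r else l)"
  by (simp add: evT_def sh_def fun_eq_iff)

lemma evT_mulT: "(evT (mulT s t) w :: 'k::field) = nc_mult (evT s) (evT t) w"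
proof (induction s arbitrary: w)
  case Lf
  then show ?case by (simp add: evT_Lf nc_mult_zero_left)
next
  case (Nd a l r)
  show ?case
  proof (cases w)
    case Nil
    then show ?thesis by (simp add: evT_def lk_addT lk_smT lk_pre nc_mult_Nil)
  next
    case (Cons b w')
    have "(evT (mulT (Nd a l r) t) w :: 'k) = of_int a * evT t w + evT (mulT (if b then r else l) t) w'"
      using Cons by (cases b) (simp_all add: evT_def lk_addT lk_smT lk_pre)
    also have "\<dots> = nc_mult (evT (Nd a l r)) (evT t) w"
      using Cons Nd.IH[of w'] by (cases b) (simp_all add: nc_mult_Cons sh_evT evT_Nil)
    finally show ?thesis .
  qed
qed

lemma evT_addT: "evT (addT s t) = (\<lambda>w. evT s w + evT t w)"
  by (simp add: evT_def lk_addT fun_eq_iff)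

lemma evT_smT: "evT (smT c t) = (\<lambda>w. of_int c * evT t w)"
  by (simp add: evT_def lk_smT fun_eq_iff)

lemma evT_brT: "lie_br (evT p) (evT q) = evT (brT p q)"
  by (simp add: lie_br_def brT_def evT_addT evT_smT evT_mulT fun_eq_iff)

lemma evT_dT: "(evT (dT t) w :: 'k::field) = delta (evT t) w"
proof (induction t arbitrary: w)
  case Lf
  then show ?case by (simp add: evT_Lf delta_zero)
next
  case (Nd a l r)
  show ?case
  proof (cases w)
    case Nil
    then show ?thesis by (simp add: evT_def delta_Nil)
  next
    case (Cons b w')
    show ?thesis
    proof (cases b)
      case True
      have "(evT (dT (Nd a l r)) w :: 'k) = evT (dT r) w'" using Cons True by (simp add: evT_def)
      also have "\<dots> = delta (evT (Nd a l r)) w"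
        using Cons True Nd.IH(2)[of w'] by (simp add: delta_Cons sh_evT)
      finally show ?thesis .
    next
      case False
      have "(evT (dT (Nd a l r)) w :: 'k) = evT (dT l) w' + evT r w'" using Cons False by (simp add: evT_def lk_addT)
      also have "\<dots> = delta (evT (Nd a l r)) w"
        using Cons False Nd.IH(1)[of w'] by (simp add: delta_Cons sh_evT, simp add: evT_def)
      finally show ?thesis .
    qed
  qed
qed

lemma lk_letT: "lk (letT c) w = (if w = [c] then 1 else 0)"
  apply (cases w)
   apply (simp add: letT_def pre_def)
  apply (rename_tac b w')
  apply (case_tac b; case_tac w'; case_tac c; simp add: letT_def pre_def)
  done

lemma gen_x_evT: "gen_x = evT (letT False)"
  by (simp add: fun_eq_iff gen_x_def evT_def lk_letT)

lemma gen_y_evT: "gen_y = evT (letT True)"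
  by (simp add: fun_eq_iff gen_y_def evT_def lk_letT)

definition genb :: "bool \<Rightarrow> 'k::field ncpoly" where
  "genb b = (if b then gen_y else gen_x)"

fun lbrk :: "bool list \<Rightarrow> 'k::field ncpoly" where
  "lbrk [] = (\<lambda>w. 0)"
| "lbrk (a # w) = foldl (\<lambda>p b. lie_br p (genb b)) (genb a) w"

lemma lbrk_snoc: "w \<noteq> [] \<Longrightarrow> lbrk (w @ [b]) = lie_br (lbrk w) (genb b)"
  by (cases w) simp_all

inductive_set spn :: "nat \<Rightarrow> 'k::field ncpoly set" for n where
  zero: "(\<lambda>w. 0) \<in> spn n"
| add: "p \<in> spn n \<Longrightarrow> q \<in> spn n \<Longrightarrow> (\<lambda>w. p w + q w) \<in> spn n"
| smult: "p \<in> spn n \<Longrightarrow> (\<lambda>w. c * p w) \<in> spn n"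
| gen: "length w = n \<Longrightarrow> lbrk w \<in> spn n"

lemma spn_diff: "p \<in> spn n \<Longrightarrow> q \<in> spn n \<Longrightarrow> (\<lambda>w. p w - q w) \<in> spn n"
proof -
  assume "p \<in> spn n" "q \<in> spn n"
  then have "(\<lambda>w. p w + (-1) * q w) \<in> spn n" by (intro spn.add spn.smult)
  then show ?thesis by simp
qed

lemma spn_br_letter: "(p :: 'k::field ncpoly) \<in> spn n \<Longrightarrow> lie_br p (genb b) \<in> spn (Suc n)"
proof (induction rule: spn.induct)
  case zero then show ?case by (simp add: lie_br_zero_left spn.zero)
next
  case (add p q) then show ?case by (simp add: lie_br_add_left spn.add)
next
  case (smult p c) then show ?case by (simp add: lie_br_smult_left spn.smult)
next
  case (gen w)
  show ?case
  proof (cases "w = []")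
    case True then show ?thesis by (simp add: lie_br_zero_left spn.zero)
  next
    case False
    then have "lie_br (lbrk w) (genb b) = (lbrk (w @ [b]) :: 'k ncpoly)" by (simp add: lbrk_snoc)
    moreover have "(lbrk (w @ [b]) :: 'k ncpoly) \<in> spn (Suc n)" by (rule spn.gen) (simp add: gen)
    ultimately show ?thesis by simp
  qed
qed

lemma spn_closure: "u \<noteq> [] \<Longrightarrow> lie_br (lbrk u) (lbrk v :: 'k::field ncpoly) \<in> spn (length u + length v)"
proof (induction v arbitrary: u rule: rev_induct)
  case Nil then show ?case by (simp add: lie_br_zero_right spn.zero)
next
  case (snoc b v u)
  show ?case
  proof (cases "v = []")
    case True
    then have e0: "lie_br (lbrk u) (lbrk (v @ [b])) = (lbrk (u @ [b]) :: 'k ncpoly)"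
      using snoc.prems by (simp add: lbrk_snoc)
    show ?thesis unfolding e0 by (rule spn.gen) (simp add: True)
  next
    case False
    have e: "lie_br (lbrk u) (lbrk (v @ [b]) :: 'k ncpoly) =
      (\<lambda>w. lie_br (lie_br (lbrk u) (lbrk v)) (genb b) w - lie_br (lbrk (u @ [b])) (lbrk v) w)"
      using False snoc.prems by (simp add: lbrk_snoc jacobi)
    have 1: "lie_br (lie_br (lbrk u) (lbrk v)) (genb b :: 'k ncpoly) \<in> spn (Suc (length u + length v))"
      using snoc.IH[OF snoc.prems] by (rule spn_br_letter)
    have 2: "lie_br (lbrk (u @ [b])) (lbrk v :: 'k ncpoly) \<in> spn (Suc (length u + length v))"
      using snoc.IH[of "u @ [b]"] by simp
    show ?thesis unfolding e using spn_diff[OF 1 2] by simp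
  qed
qed

lemma spn_br: "p \<in> spn i \<Longrightarrow> q \<in> spn j \<Longrightarrow> lie_br p q \<in> spn (i + j)"
proof (induction p rule: spn.induct)
  case zero then show ?case by (simp add: lie_br_zero_left spn.zero)
next
  case (add p p') then show ?case by (simp add: lie_br_add_left spn.add)
next
  case (smult p c) then show ?case by (simp add: lie_br_smult_left spn.smult)
next
  case (gen u)
  from gen.prems show ?case
  proof (induction q rule: spn.induct)
    case zero then show ?case by (simp add: lie_br_zero_right spn.zero)
  next
    case (add q q') then show ?case by (simp add: lie_br_add_right spn.add)
  next
    case (smult q c) then show ?case by (simp add: lie_br_smult_right spn.smult)
  next
    case (gen v)
    show ?case
    proof (cases "u = []")
      case True then show ?thesis by (simp add: lie_br_zero_left spn.zero)
    next
      case False then show ?thesis using spn_closure[OF False, of v] gen \<open>length u = i\<close> by simp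
    qed
  qed
qed

lemma spn_sum: "finite I \<Longrightarrow> (\<And>i. i \<in> I \<Longrightarrow> F i \<in> spn n) \<Longrightarrow> (\<lambda>w. \<Sum>i\<in>I. F i w) \<in> spn n"
proof (induction I rule: finite_induct)
  case empty then show ?case by (simp add: spn.zero)
next
  case (insert x I) then show ?case by (simp add: spn.add)
qed

definition cmp :: "nat \<Rightarrow> 'k::field ncpoly \<Rightarrow> 'k ncpoly" where
  "cmp n p = (\<lambda>w. if length w = n then p w else 0)"

lemma nc_mult_cmp:
  assumes "i \<le> n"
  shows "nc_mult (cmp i p) (cmp (n - i) q) w = (if length w = n then p (take i w) * q (drop i w) else 0)"
proof -
  have "nc_mult (cmp i p) (cmp (n - i) q) w =
     (\<Sum>j\<le>length w. if j = i then (if length w = n then p (take i w) * q (drop i w) else 0) else 0)"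
    unfolding nc_mult_def
  proof (rule sum.cong)
    fix j assume "j \<in> {..length w}"
    then have j: "j \<le> length w" by simp
    show "cmp i p (take j w) * cmp (n - i) q (drop j w) =
      (if j = i then (if length w = n then p (take i w) * q (drop i w) else 0) else 0)"
    proof (cases "j = i")
      case True
      have "length w - i = n - i \<longleftrightarrow> length w = n" using True j assms by arith
      then show ?thesis using True j by (simp add: cmp_def)
    next
      case False
      then show ?thesis using j by (simp add: cmp_def)
    qed
  qed simp
  also have "\<dots> = (if length w = n then p (take i w) * q (drop i w) else 0)"
    using assms by (simp add: sum.delta)
  finally show ?thesis .
qed

lemma sum_cmp: "(\<Sum>i\<le>n. nc_mult (cmp i p) (cmp (n - i) q) w) = (if length w = n then nc_mult p q w else 0)"
proof -
  have "(\<Sum>i\<le>n. nc_mult (cmp i p) (cmp (n - i) q) w) = (\<Sum>i\<le>n. if length w = n then p (take i w) * q (drop i w) else 0)"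
    by (rule sum.cong) (simp_all add: nc_mult_cmp)
  then show ?thesis by (simp add: nc_mult_def)
qed

lemma sum_cmp': "(\<Sum>i\<le>n. nc_mult (cmp (n - i) q) (cmp i p) w) = (if length w = n then nc_mult q p w else 0)"
proof -
  have "(\<Sum>i\<le>n. nc_mult (cmp (n - i) q) (cmp i p) w) = (\<Sum>i\<le>n. nc_mult (cmp (n - (n - i)) q) (cmp (n - i) p) w)"
    by (rule sum.reindex_bij_witness[where i="\<lambda>i. n - i" and j="\<lambda>i. n - i"]) auto
  also have "\<dots> = (\<Sum>i\<le>n. nc_mult (cmp i q) (cmp (n - i) p) w)"
    by (rule sum.cong) auto
  finally show ?thesis by (simp add: sum_cmp)
qed

lemma cmp_lie_br: "cmp n (lie_br p q) = (\<lambda>w. \<Sum>i\<le>n. lie_br (cmp i p) (cmp (n - i) q) w)"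
  by (simp add: fun_eq_iff lie_br_def sum_subtractf sum_cmp sum_cmp') (simp add: cmp_def)

lemma cmp_gen_x: "cmp n gen_x = (if n = 1 then lbrk [False] else (\<lambda>w. 0))"
  by (auto simp: fun_eq_iff cmp_def gen_x_def genb_def)

lemma cmp_gen_y: "cmp n gen_y = (if n = 1 then lbrk [True] else (\<lambda>w. 0))"
  by (auto simp: fun_eq_iff cmp_def gen_y_def genb_def)

lemma free_lie_spn: "p \<in> lie_span {gen_x, gen_y} \<Longrightarrow> cmp n p \<in> spn n"
proof (induction arbitrary: n rule: lie_span.induct)
  case (gen p)
  then show ?case
    using spn.gen[of "[False]" 1] spn.gen[of "[True]" 1]
    by (auto simp: cmp_gen_x cmp_gen_y spn.zero)
next
  case zero then show ?case by (simp add: cmp_def spn.zero)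
next
  case (add p q)
  have "cmp n (\<lambda>w. p w + q w) = (\<lambda>w. cmp n p w + cmp n q w)" by (simp add: cmp_def fun_eq_iff)
  then show ?case using add by (simp add: spn.add)
next
  case (smult p c)
  have "cmp n (\<lambda>w. c * p w) = (\<lambda>w. c * cmp n p w)" by (simp add: cmp_def fun_eq_iff)
  then show ?case using smult by (simp add: spn.smult)
next
  case (br p q)
  have X: "\<And>i. i \<in> {..n} \<Longrightarrow> lie_br (cmp i p) (cmp (n - i) q) \<in> spn n"
  proof -
    fix i assume "i \<in> {..n}"
    then have "i + (n - i) = n" by simp
    then show "lie_br (cmp i p) (cmp (n - i) q) \<in> spn n"
      using spn_br[OF br.IH(1)[of i] br.IH(2)[of "n - i"]] by simp
  qed
  show ?case unfolding cmp_lie_br by (rule spn_sum[OF finite_atMost X])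
qed

lemma homog_cmp: "homog n p \<Longrightarrow> cmp n p = p"
  by (auto simp: homog_def cmp_def fun_eq_iff)

fun lbrkT :: "bool list \<Rightarrow> tr" where
  "lbrkT [] = Lf"
| "lbrkT (a # w) = foldl (\<lambda>P b. brT P (letT b)) (letT a) w"

fun words :: "nat \<Rightarrow> bool list list" where
  "words 0 = [[]]"
| "words (Suc n) = map (Cons False) (words n) @ map (Cons True) (words n)"

definition rowT :: "tr \<Rightarrow> tr \<Rightarrow> (bool list \<times> int \<times> (bool list \<times> int) list \<times> (bool list \<times> int) list) \<Rightarrow> bool" where
  "rowT T D r = (case r of (v, a, ds, bs) \<Rightarrow>
     a * lk T v = sum_list (map (\<lambda>(u, c). c * lk D u) ds) + sum_list (map (\<lambda>(u, c). c * lk T u) bs))"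

definition CERT :: "(bool list \<times> int \<times> (bool list \<times> int) list \<times> (bool list \<times> int) list) list" where
  "CERT = [
    ([False,False,False,False,False,False,False], 1, [], []),
    ([False,False,False,False,False,False,True], 1, [], [([False,False,False,False,False,False,True], 1)]),
    ([False,False,False,False,False,True,False], 1, [], [([False,False,False,False,False,False,True], (-6))]),
    ([False,False,False,False,False,True,True], 1, [([False,False,False,False,False,False,True], (-1))], []),
    ([False,False,False,False,True,False,False], 1, [], [([False,False,False,False,False,False,True], 15)]),
    ([False,False,False,False,True,False,True], 1, [], [([False,False,False,False,True,False,True], 1)]),
    ([False,False,False,False,True,True,False], 1, [([False,False,False,False,False,False,True], 5)], [([False,False,False,False,True,False,True], (-1))]),
    ([False,False,False,False,True,True,True], 2, [([False,False,False,False,False,True,True], (-1))], []),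
    ([False,False,False,True,False,False,False], 1, [], [([False,False,False,False,False,False,True], (-20))]),
    ([False,False,False,True,False,False,True], 1, [([False,False,False,False,False,False,True], 10)], [([False,False,False,False,True,False,True], (-4)), ([False,False,False,True,True,False,False], 1)]),
    ([False,False,False,True,False,True,False], 1, [([False,False,False,False,False,False,True], (-20))], [([False,False,False,False,True,False,True], 4), ([False,False,False,True,True,False,False], (-2))]),
    ([False,False,False,True,False,True,True], 1, [], [([False,False,False,True,False,True,True], 1)]),
    ([False,False,False,True,True,False,False], 1, [], [([False,False,False,True,True,False,False], 1)]),
    ([False,False,False,True,True,False,True], 2, [([False,False,False,False,False,True,True], (-1)), ([False,False,False,False,True,False,True], (-2))], [([False,False,False,True,False,True,True], (-4))]),
    ([False,False,False,True,True,True,False], 2, [([False,False,False,False,False,True,True], 5), ([False,False,False,False,True,False,True], 2)], [([False,False,False,True,False,True,True], 2)]),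
    ([False,False,False,True,True,True,True], 3, [([False,False,False,False,True,True,True], (-1))], []),
    ([False,False,True,False,False,False,False], 1, [], [([False,False,False,False,False,False,True], 15)]),
    ([False,False,True,False,False,False,True], 1, [([False,False,False,False,False,False,True], (-20))], [([False,False,False,False,True,False,True], 6), ([False,False,False,True,True,False,False], (-4))]),
    ([False,False,True,False,False,True,False], 1, [([False,False,False,False,False,False,True], 30)], [([False,False,False,False,True,False,True], (-6)), ([False,False,False,True,True,False,False], 9)]),
    ([False,False,True,False,False,True,True], 1, [([False,False,False,False,False,True,True], 11), ([False,False,False,False,True,False,True], 4), ([False,False,False,True,False,False,True], 1)], [([False,False,False,True,False,True,True], (-2))]),
    ([False,False,True,False,True,False,False], 1, [], [([False,False,False,True,True,False,False], (-6))]),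
    ([False,False,True,False,True,False,True], 3, [([False,False,False,False,False,True,True], (-42)), ([False,False,False,False,True,False,True], (-12)), ([False,False,False,True,False,False,True], (-4))], [([False,False,False,True,False,True,True], 12), ([True,False,False,False,True,False,True], 1)]),
    ([False,False,True,False,True,True,False], 3, [([False,False,False,False,False,True,True], (-24)), ([False,False,False,False,True,False,True], (-12)), ([False,False,False,True,False,False,True], (-2))], [([False,False,False,True,False,True,True], (-9)), ([True,False,False,False,True,False,True], (-1))]),
    ([False,False,True,False,True,True,True], 6, [([False,False,False,False,True,True,True], (-22)), ([False,False,False,True,False,True,True], (-12)), ([False,False,True,False,False,True,True], (-3))], []),
    ([False,False,True,True,False,False,False], 1, [], [([False,False,False,True,True,False,False], 1)]),
    ([False,False,True,True,False,False,True], 6, [([False,False,False,False,False,True,True], (-51)), ([False,False,False,False,True,False,True], (-30)), ([False,False,False,True,False,False,True], (-10))], [([False,False,False,True,False,True,True], (-6)), ([True,False,False,False,True,False,True], (-2))]),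
    ([False,False,True,True,False,True,False], 6, [([False,False,False,False,False,True,True], 195), ([False,False,False,False,True,False,True], 102), ([False,False,False,True,False,False,True], 28)], [([False,False,False,True,False,True,True], 24), ([True,False,False,False,True,False,True], 2)]),
    ([False,False,True,True,False,True,True], 6, [([False,False,False,False,True,True,True], 64), ([False,False,False,True,False,True,True], 30), ([False,False,True,False,False,True,True], 9)], []),
    ([False,False,True,True,True,False,False], 1, [([False,False,False,False,False,True,True], (-16)), ([False,False,False,False,True,False,True], (-8)), ([False,False,False,True,False,False,True], (-2))], [([False,False,False,True,False,True,True], (-2))]),
    ([False,False,True,True,True,False,True], 6, [([False,False,False,False,True,True,True], (-65)), ([False,False,False,True,False,True,True], (-30)), ([False,False,False,True,True,False,True], (-3)), ([False,False,True,False,False,True,True], (-9))], []),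
    ([False,False,True,True,True,True,False], 6, [([False,False,False,False,True,True,True], 29), ([False,False,False,True,False,True,True], 12), ([False,False,False,True,True,False,True], 3), ([False,False,True,False,False,True,True], 3)], []),
    ([False,False,True,True,True,True,True], 4, [([False,False,False,True,True,True,True], (-1))], []),
    ([False,True,False,False,False,False,False], 1, [], [([False,False,False,False,False,False,True], (-6))]),
    ([False,True,False,False,False,False,True], 1, [([False,False,False,False,False,False,True], 20)], [([False,False,False,False,True,False,True], (-5)), ([False,False,False,True,True,False,False], 5)]),
    ([False,True,False,False,False,True,False], 1, [([False,False,False,False,False,False,True], (-40))], [([False,False,False,False,True,False,True], 8), ([False,False,False,True,True,False,False], (-12))]),
    ([False,True,False,False,False,True,True], 2, [([False,False,False,False,False,True,True], (-31)), ([False,False,False,False,True,False,True], (-14)), ([False,False,False,True,False,False,True], (-4))], [([False,False,False,True,False,True,True], 2)]),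
    ([False,True,False,False,True,False,False], 1, [([False,False,False,False,False,False,True], 30)], [([False,False,False,False,True,False,True], (-6)), ([False,False,False,True,True,False,False], 9)]),
    ([False,True,False,False,True,False,True], 3, [([False,False,False,False,False,True,True], 45), ([False,False,False,False,True,False,True], 18), ([False,False,False,True,False,False,True], 4)], [([False,False,False,True,False,True,True], (-6)), ([True,False,False,False,True,False,True], (-4))]),
    ([False,True,False,False,True,True,False], 6, [([False,False,False,False,False,True,True], 57), ([False,False,False,False,True,False,True], 42), ([False,False,False,True,False,False,True], 16)], [([False,False,False,True,False,True,True], 18), ([True,False,False,False,True,False,True], 8)]),
    ([False,True,False,False,True,True,True], 6, [([False,False,False,False,True,True,True], 71), ([False,False,False,True,False,True,True], 30), ([False,False,False,True,True,False,True], 3), ([False,False,True,False,False,True,True], 6)], []),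
    ([False,True,False,True,False,False,False], 1, [([False,False,False,False,False,False,True], (-20))], [([False,False,False,False,True,False,True], 4), ([False,False,False,True,True,False,False], (-2))]),
    ([False,True,False,True,False,False,True], 3, [([False,False,False,False,False,True,True], 99), ([False,False,False,False,True,False,True], 54), ([False,False,False,True,False,False,True], 20)], [([False,False,False,True,False,True,True], 6), ([True,False,False,False,True,False,True], 7)]),
    ([False,True,False,True,False,True,False], 3, [([False,False,False,False,False,True,True], (-204)), ([False,False,False,False,True,False,True], (-120)), ([False,False,False,True,False,False,True], (-40))], [([False,False,False,True,False,True,True], (-24)), ([True,False,False,False,True,False,True], (-8))]),
    ([False,True,False,True,False,True,True], 6, [([False,False,False,False,True,True,True], (-221)), ([False,False,False,True,False,True,True], (-102)), ([False,False,False,True,True,False,True], (-21)), ([False,False,True,False,False,True,True], (-30)), ([False,False,True,False,True,False,True], (-6))], []),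
    ([False,True,False,True,True,False,False], 6, [([False,False,False,False,False,True,True], 195), ([False,False,False,False,True,False,True], 102), ([False,False,False,True,False,False,True], 28)], [([False,False,False,True,False,True,True], 24), ([True,False,False,False,True,False,True], 2)]),
    ([False,True,False,True,True,False,True], 3, [([False,False,False,False,True,True,True], 167), ([False,False,False,True,False,True,True], 90), ([False,False,False,True,True,False,True], 33), ([False,False,True,False,False,True,True], 33), ([False,False,True,False,True,False,True], 12)], []),
    ([False,True,False,True,True,True,False], 6, [([False,False,False,False,True,True,True], (-211)), ([False,False,False,True,False,True,True], (-114)), ([False,False,False,True,True,False,True], (-51)), ([False,False,True,False,False,True,True], (-42)), ([False,False,True,False,True,False,True], (-18))], []),
    ([False,True,False,True,True,True,True], 3, [([False,False,False,True,True,True,True], (-14)), ([False,False,True,False,True,True,True], (-7)), ([False,False,True,True,True,False,True], 1)], []),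
    ([False,True,True,False,False,False,False], 1, [([False,False,False,False,False,False,True], 5)], [([False,False,False,False,True,False,True], (-1))]),
    ([False,True,True,False,False,False,True], 2, [([False,False,False,False,False,True,True], (-17)), ([False,False,False,False,True,False,True], (-10)), ([False,False,False,True,False,False,True], (-4))], [([False,False,False,True,False,True,True], (-2)), ([True,False,False,False,True,False,True], (-2))]),
    ([False,True,True,False,False,True,False], 6, [([False,False,False,False,False,True,True], 57), ([False,False,False,False,True,False,True], 42), ([False,False,False,True,False,False,True], 16)], [([False,False,False,True,False,True,True], 18), ([True,False,False,False,True,False,True], 8)]),
    ([False,True,True,False,False,True,True], 3, [([False,False,False,False,True,True,True], 25), ([False,False,False,True,False,True,True], 15), ([False,False,False,True,True,False,True], 6), ([False,False,True,False,False,True,True], 6), ([False,False,True,False,True,False,True], 3)], []),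
    ([False,True,True,False,True,False,False], 3, [([False,False,False,False,False,True,True], (-24)), ([False,False,False,False,True,False,True], (-12)), ([False,False,False,True,False,False,True], (-2))], [([False,False,False,True,False,True,True], (-9)), ([True,False,False,False,True,False,True], (-1))]),
    ([False,True,True,False,True,False,True], 6, [([False,False,False,False,True,True,True], (-313)), ([False,False,False,True,False,True,True], (-198)), ([False,False,False,True,True,False,True], (-93)), ([False,False,True,False,False,True,True], (-84)), ([False,False,True,False,True,False,True], (-42))], []),
    ([False,True,True,False,True,True,False], 1, [([False,False,False,False,True,True,True], 51), ([False,False,False,True,False,True,True], 30), ([False,False,False,True,True,False,True], 15), ([False,False,True,False,False,True,True], 12), ([False,False,True,False,True,False,True], 6)], []),
    ([False,True,True,False,True,True,True], 12, [([False,False,False,True,True,True,True], 221), ([False,False,True,False,True,True,True], 100), ([False,False,True,True,True,False,True], (-16))], []),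
    ([False,True,True,True,False,False,False], 2, [([False,False,False,False,False,True,True], 5), ([False,False,False,False,True,False,True], 2)], [([False,False,False,True,False,True,True], 2)]),
    ([False,True,True,True,False,False,True], 6, [([False,False,False,False,True,True,True], 160), ([False,False,False,True,False,True,True], 96), ([False,False,False,True,True,False,True], 42), ([False,False,True,False,False,True,True], 39), ([False,False,True,False,True,False,True], 18)], []),
    ([False,True,True,True,False,True,False], 6, [([False,False,False,False,True,True,True], (-211)), ([False,False,False,True,False,True,True], (-114)), ([False,False,False,True,True,False,True], (-51)), ([False,False,True,False,False,True,True], (-42)), ([False,False,True,False,True,False,True], (-18))], []),
    ([False,True,True,True,False,True,True], 1, [([False,False,False,True,True,True,True], (-22)), ([False,False,True,False,True,True,True], (-10)), ([False,False,True,True,True,False,True], 2)], []),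
    ([False,True,True,True,True,False,False], 6, [([False,False,False,False,True,True,True], 29), ([False,False,False,True,False,True,True], 12), ([False,False,False,True,True,False,True], 3), ([False,False,True,False,False,True,True], 3)], []),
    ([False,True,True,True,True,False,True], 12, [([False,False,False,True,True,True,True], 175), ([False,False,True,False,True,True,True], 80), ([False,False,True,True,True,False,True], (-20))], []),
    ([False,True,True,True,True,True,False], 6, [([False,False,False,True,True,True,True], (-35)), ([False,False,True,False,True,True,True], (-16)), ([False,False,True,True,True,False,True], 4)], []),
    ([False,True,True,True,True,True,True], 5, [([False,False,True,True,True,True,True], (-1))], []),
    ([True,False,False,False,False,False,False], 1, [], [([False,False,False,False,False,False,True], 1)]),
    ([True,False,False,False,False,False,True], 1, [([False,False,False,False,False,False,True], (-8))], [([False,False,False,False,True,False,True], 2), ([False,False,False,True,True,False,False], (-2))]),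
    ([True,False,False,False,False,True,False], 1, [([False,False,False,False,False,False,True], 20)], [([False,False,False,False,True,False,True], (-5)), ([False,False,False,True,True,False,False], 5)]),
    ([True,False,False,False,False,True,True], 1, [([False,False,False,False,False,True,True], 6), ([False,False,False,False,True,False,True], 3), ([False,False,False,True,False,False,True], 1)], []),
    ([True,False,False,False,True,False,False], 1, [([False,False,False,False,False,False,True], (-20))], [([False,False,False,False,True,False,True], 6), ([False,False,False,True,True,False,False], (-4))]),
    ([True,False,False,False,True,False,True], 1, [], [([True,False,False,False,True,False,True], 1)]),
    ([True,False,False,False,True,True,False], 2, [([False,False,False,False,False,True,True], (-17)), ([False,False,False,False,True,False,True], (-10)), ([False,False,False,True,False,False,True], (-4))], [([False,False,False,True,False,True,True], (-2)), ([True,False,False,False,True,False,True], (-2))]),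
    ([True,False,False,False,True,True,True], 6, [([False,False,False,False,True,True,True], (-41)), ([False,False,False,True,False,True,True], (-18)), ([False,False,False,True,True,False,True], (-3)), ([False,False,True,False,False,True,True], (-3))], []),
    ([True,False,False,True,False,False,False], 1, [([False,False,False,False,False,False,True], 10)], [([False,False,False,False,True,False,True], (-4)), ([False,False,False,True,True,False,False], 1)]),
    ([True,False,False,True,False,False,True], 1, [([False,False,False,False,False,True,True], (-24)), ([False,False,False,False,True,False,True], (-12)), ([False,False,False,True,False,False,True], (-4))], [([True,False,False,False,True,False,True], (-2))]),
    ([True,False,False,True,False,True,False], 3, [([False,False,False,False,False,True,True], 99), ([False,False,False,False,True,False,True], 54), ([False,False,False,True,False,False,True], 20)], [([False,False,False,True,False,True,True], 6), ([True,False,False,False,True,False,True], 7)]),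
    ([True,False,False,True,False,True,True], 2, [([False,False,False,False,True,True,True], 53), ([False,False,False,True,False,True,True], 26), ([False,False,False,True,True,False,True], 7), ([False,False,True,False,False,True,True], 7), ([False,False,True,False,True,False,True], 2)], []),
    ([True,False,False,True,True,False,False], 6, [([False,False,False,False,False,True,True], (-51)), ([False,False,False,False,True,False,True], (-30)), ([False,False,False,True,False,False,True], (-10))], [([False,False,False,True,False,True,True], (-6)), ([True,False,False,False,True,False,True], (-2))]),
    ([True,False,False,True,True,False,True], 2, [([False,False,False,False,True,True,True], (-89)), ([False,False,False,True,False,True,True], (-50)), ([False,False,False,True,True,False,True], (-19)), ([False,False,True,False,False,True,True], (-19)), ([False,False,True,False,True,False,True], (-8))], []),
    ([True,False,False,True,True,True,False], 6, [([False,False,False,False,True,True,True], 160), ([False,False,False,True,False,True,True], 96), ([False,False,False,True,True,False,True], 42), ([False,False,True,False,False,True,True], 39), ([False,False,True,False,True,False,True], 18)], []),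
    ([True,False,False,True,True,True,True], 12, [([False,False,False,True,True,True,True], 71), ([False,False,True,False,True,True,True], 28), ([False,False,True,True,True,False,True], (-4))], []),
    ([True,False,True,False,False,False,False], 1, [], [([False,False,False,False,True,False,True], 1)]),
    ([True,False,True,False,False,False,True], 1, [], [([True,False,False,False,True,False,True], 1)]),
    ([True,False,True,False,False,True,False], 3, [([False,False,False,False,False,True,True], 45), ([False,False,False,False,True,False,True], 18), ([False,False,False,True,False,False,True], 4)], [([False,False,False,True,False,True,True], (-6)), ([True,False,False,False,True,False,True], (-4))]),
    ([True,False,True,False,False,True,True], 3, [([False,False,False,False,True,True,True], (-46)), ([False,False,False,True,False,True,True], (-24)), ([False,False,False,True,True,False,True], (-6)), ([False,False,True,False,False,True,True], (-6)), ([False,False,True,False,True,False,True], (-3))], []),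
    ([True,False,True,False,True,False,False], 3, [([False,False,False,False,False,True,True], (-42)), ([False,False,False,False,True,False,True], (-12)), ([False,False,False,True,False,False,True], (-4))], [([False,False,False,True,False,True,True], 12), ([True,False,False,False,True,False,True], 1)]),
    ([True,False,True,False,True,False,True], 3, [([False,False,False,False,True,True,True], 200), ([False,False,False,True,False,True,True], 120), ([False,False,False,True,True,False,True], 48), ([False,False,True,False,False,True,True], 48), ([False,False,True,False,True,False,True], 24)], []),
    ([True,False,True,False,True,True,False], 6, [([False,False,False,False,True,True,True], (-313)), ([False,False,False,True,False,True,True], (-198)), ([False,False,False,True,True,False,True], (-93)), ([False,False,True,False,False,True,True], (-84)), ([False,False,True,False,True,False,True], (-42))], []),
    ([True,False,True,False,True,True,True], 6, [([False,False,False,True,True,True,True], (-109)), ([False,False,True,False,True,True,True], (-44)), ([False,False,True,True,True,False,True], 8)], []),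
    ([True,False,True,True,False,False,False], 2, [([False,False,False,False,False,True,True], (-1)), ([False,False,False,False,True,False,True], (-2))], [([False,False,False,True,False,True,True], (-4))]),
    ([True,False,True,True,False,False,True], 2, [([False,False,False,False,True,True,True], (-89)), ([False,False,False,True,False,True,True], (-50)), ([False,False,False,True,True,False,True], (-19)), ([False,False,True,False,False,True,True], (-19)), ([False,False,True,False,True,False,True], (-8))], []),
    ([True,False,True,True,False,True,False], 3, [([False,False,False,False,True,True,True], 167), ([False,False,False,True,False,True,True], 90), ([False,False,False,True,True,False,True], 33), ([False,False,True,False,False,True,True], 33), ([False,False,True,False,True,False,True], 12)], []),
    ([True,False,True,True,False,True,True], 4, [([False,False,False,True,True,True,True], 43), ([False,False,True,False,True,True,True], 20), ([False,False,True,True,True,False,True], (-8))], []),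
    ([True,False,True,True,True,False,False], 6, [([False,False,False,False,True,True,True], (-65)), ([False,False,False,True,False,True,True], (-30)), ([False,False,False,True,True,False,True], (-3)), ([False,False,True,False,False,True,True], (-9))], []),
    ([True,False,True,True,True,False,True], 3, [([False,False,False,True,True,True,True], (-43)), ([False,False,True,False,True,True,True], (-20)), ([False,False,True,True,True,False,True], 8)], []),
    ([True,False,True,True,True,True,False], 12, [([False,False,False,True,True,True,True], 175), ([False,False,True,False,True,True,True], 80), ([False,False,True,True,True,False,True], (-20))], []),
    ([True,False,True,True,True,True,True], 5, [([False,False,True,True,True,True,True], 6)], []),
    ([True,True,False,False,False,False,False], 1, [([False,False,False,False,False,False,True], (-1))], []),
    ([True,True,False,False,False,False,True], 1, [([False,False,False,False,False,True,True], 6), ([False,False,False,False,True,False,True], 3), ([False,False,False,True,False,False,True], 1)], []),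
    ([True,True,False,False,False,True,False], 2, [([False,False,False,False,False,True,True], (-31)), ([False,False,False,False,True,False,True], (-14)), ([False,False,False,True,False,False,True], (-4))], [([False,False,False,True,False,True,True], 2)]),
    ([True,True,False,False,False,True,True], 3, [([False,False,False,False,True,True,True], 14), ([False,False,False,True,False,True,True], 6)], []),
    ([True,True,False,False,True,False,False], 1, [([False,False,False,False,False,True,True], 11), ([False,False,False,False,True,False,True], 4), ([False,False,False,True,False,False,True], 1)], [([False,False,False,True,False,True,True], (-2))]),
    ([True,True,False,False,True,False,True], 3, [([False,False,False,False,True,True,True], (-46)), ([False,False,False,True,False,True,True], (-24)), ([False,False,False,True,True,False,True], (-6)), ([False,False,True,False,False,True,True], (-6)), ([False,False,True,False,True,False,True], (-3))], []),
    ([True,True,False,False,True,True,False], 3, [([False,False,False,False,True,True,True], 25), ([False,False,False,True,False,True,True], 15), ([False,False,False,True,True,False,True], 6), ([False,False,True,False,False,True,True], 6), ([False,False,True,False,True,False,True], 3)], []),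
    ([True,True,False,False,True,True,True], 4, [([False,False,False,True,True,True,True], (-11)), ([False,False,True,False,True,True,True], (-4))], []),
    ([True,True,False,True,False,False,False], 1, [], [([False,False,False,True,False,True,True], 1)]),
    ([True,True,False,True,False,False,True], 2, [([False,False,False,False,True,True,True], 53), ([False,False,False,True,False,True,True], 26), ([False,False,False,True,True,False,True], 7), ([False,False,True,False,False,True,True], 7), ([False,False,True,False,True,False,True], 2)], []),
    ([True,True,False,True,False,True,False], 6, [([False,False,False,False,True,True,True], (-221)), ([False,False,False,True,False,True,True], (-102)), ([False,False,False,True,True,False,True], (-21)), ([False,False,True,False,False,True,True], (-30)), ([False,False,True,False,True,False,True], (-6))], []),
    ([True,True,False,True,False,True,True], 2, [([False,False,False,True,True,True,True], 33), ([False,False,True,False,True,True,True], 12)], []),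
    ([True,True,False,True,True,False,False], 6, [([False,False,False,False,True,True,True], 64), ([False,False,False,True,False,True,True], 30), ([False,False,True,False,False,True,True], 9)], []),
    ([True,True,False,True,True,False,True], 4, [([False,False,False,True,True,True,True], 43), ([False,False,True,False,True,True,True], 20), ([False,False,True,True,True,False,True], (-8))], []),
    ([True,True,False,True,True,True,False], 1, [([False,False,False,True,True,True,True], (-22)), ([False,False,True,False,True,True,True], (-10)), ([False,False,True,True,True,False,True], 2)], []),
    ([True,True,False,True,True,True,True], 1, [([False,False,True,True,True,True,True], (-3))], []),
    ([True,True,True,False,False,False,False], 2, [([False,False,False,False,False,True,True], (-1))], []),
    ([True,True,True,False,False,False,True], 6, [([False,False,False,False,True,True,True], (-41)), ([False,False,False,True,False,True,True], (-18)), ([False,False,False,True,True,False,True], (-3)), ([False,False,True,False,False,True,True], (-3))], []),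
    ([True,True,True,False,False,True,False], 6, [([False,False,False,False,True,True,True], 71), ([False,False,False,True,False,True,True], 30), ([False,False,False,True,True,False,True], 3), ([False,False,True,False,False,True,True], 6)], []),
    ([True,True,True,False,False,True,True], 4, [([False,False,False,True,True,True,True], (-11)), ([False,False,True,False,True,True,True], (-4))], []),
    ([True,True,True,False,True,False,False], 6, [([False,False,False,False,True,True,True], (-22)), ([False,False,False,True,False,True,True], (-12)), ([False,False,True,False,False,True,True], (-3))], []),
    ([True,True,True,False,True,False,True], 6, [([False,False,False,True,True,True,True], (-109)), ([False,False,True,False,True,True,True], (-44)), ([False,False,True,True,True,False,True], 8)], []),
    ([True,True,True,False,True,True,False], 12, [([False,False,False,True,True,True,True], 221), ([False,False,True,False,True,True,True], 100), ([False,False,True,True,True,False,True], (-16))], []),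
    ([True,True,True,False,True,True,True], 1, [([False,False,True,True,True,True,True], 4)], []),
    ([True,True,True,True,False,False,False], 3, [([False,False,False,False,True,True,True], (-1))], []),
    ([True,True,True,True,False,False,True], 12, [([False,False,False,True,True,True,True], 71), ([False,False,True,False,True,True,True], 28), ([False,False,True,True,True,False,True], (-4))], []),
    ([True,True,True,True,False,True,False], 3, [([False,False,False,True,True,True,True], (-14)), ([False,False,True,False,True,True,True], (-7)), ([False,False,True,True,True,False,True], 1)], []),
    ([True,True,True,True,False,True,True], 1, [([False,False,True,True,True,True,True], (-3))], []),
    ([True,True,True,True,True,False,False], 4, [([False,False,False,True,True,True,True], (-1))], []),
    ([True,True,True,True,True,False,True], 5, [([False,False,True,True,True,True,True], 6)], []),
    ([True,True,True,True,True,True,False], 5, [([False,False,True,True,True,True,True], (-1))], []),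
    ([True,True,True,True,True,True,True], 1, [], [])]"

lemma chk: "list_all (\<lambda>t. list_all (rowT (lbrkT (True # False # t)) (dT (lbrkT (True # False # t)))) CERT) (words 5)"
  by code_simp

lemma set_words: "set (words n) = {w. length w = n}"
proof (induction n)
  case 0 then show ?case by auto
next
  case (Suc n)
  show ?case
  proof (rule set_eqI)
    fix w :: "bool list"
    show "w \<in> set (words (Suc n)) \<longleftrightarrow> w \<in> {w. length w = Suc n}"
    proof (cases w)
      case Nil then show ?thesis by auto
    next
      case (Cons b w')
      then show ?thesis using Suc by (cases b) (auto simp: image_iff)
    qed
  qed
qed

lemma genb_evT: "(genb b :: 'k::field ncpoly) = evT (letT b)"
  by (cases b) (simp_all add: genb_def gen_x_evT gen_y_evT)

lemma foldl_evT: "foldl (\<lambda>p b. lie_br p (genb b)) (evT P :: 'k::field ncpoly) w = evT (foldl (\<lambda>P b. brT P (letT b)) P w)"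
  by (induction w arbitrary: P) (simp_all add: genb_evT evT_brT)

lemma lbrk_evT: "(lbrk w :: 'k::field ncpoly) = evT (lbrkT w)"
proof (cases w)
  case Nil then show ?thesis by (simp add: evT_Lf)
next
  case (Cons a list)
  then show ?thesis by (simp only: lbrk.simps genb_evT[of a] foldl_evT lbrkT.simps)
qed

lemma foldl_zero: "foldl (\<lambda>p b. lie_br p (genb b)) (\<lambda>w. 0 :: 'k::field) t = (\<lambda>w. 0)"
  by (induction t) (simp_all add: lie_br_zero_left)

lemma foldl_smult: "foldl (\<lambda>p b. lie_br p (genb b)) (\<lambda>w. c * p w :: 'k::field) t = (\<lambda>w. c * foldl (\<lambda>p b. lie_br p (genb b)) p t w)"
  by (induction t arbitrary: p) (simp_all add: lie_br_smult_left)

lemma lbrk_aa: "(lbrk (a # a # t) :: 'k::field ncpoly) = (\<lambda>w. 0)"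
  by (simp add: lie_br_self foldl_zero)

lemma lie_br_neg_left: "lie_br (\<lambda>w. - p w) r = (\<lambda>w. - lie_br p r w)"
  by (simp add: lie_br_def fun_eq_iff nc_mult_def sum_negf)

lemma foldl_neg: "foldl (\<lambda>p b. lie_br p (genb b)) (\<lambda>w. - p w :: 'k::field) t = (\<lambda>w. - foldl (\<lambda>p b. lie_br p (genb b)) p t w)"
  by (induction t arbitrary: p) (simp_all add: lie_br_neg_left)

lemma lbrk_xy: "(lbrk (False # True # t) :: 'k::field ncpoly) = (\<lambda>w. - lbrk (True # False # t) w)"
proof -
  have "lie_br (genb False) (genb True) = (\<lambda>w. - lie_br (genb True) (genb False) w :: 'k)"
    by (simp add: lie_br_def fun_eq_iff)
  then show ?thesis by (simp add: foldl_neg)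
qed

type_synonym row = "bool list \<times> int \<times> (bool list \<times> int) list \<times> (bool list \<times> int) list"

definition rowP :: "'k::field ncpoly \<Rightarrow> row \<Rightarrow> bool" where
  "rowP g r = (case r of (v, a, ds, bs) \<Rightarrow>
     of_int a * g v = sum_list (map (\<lambda>(u, c). of_int c * delta g u) ds) + sum_list (map (\<lambda>(u, c). of_int c * g u) bs))"

lemma sl_add: "sum_list (map (\<lambda>(u, c). of_int c * (F u + G u)) ds) =
   sum_list (map (\<lambda>(u, c). of_int c * F u) ds) + (sum_list (map (\<lambda>(u, c). of_int c * G u) ds) :: 'k::field)"
  by (induction ds) (auto simp: algebra_simps)

lemma sl_smult: "sum_list (map (\<lambda>(u, c). of_int c * (k * F u)) ds) = k * (sum_list (map (\<lambda>(u, c). of_int c * F u) ds) :: 'k::field)"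
  by (induction ds) (auto simp: algebra_simps)

lemma sl_zero: "(\<forall>p\<in>set ds. F (fst p) = 0) \<Longrightarrow> sum_list (map (\<lambda>(u, c). of_int c * F u) ds) = (0 :: 'k::field)"
  by (induction ds) auto

lemma sl_of_int: "(of_int (sum_list (map (\<lambda>(u, c). c * lk D u) ds)) :: 'k::field) =
   sum_list (map (\<lambda>(u, c). of_int c * evT D u) ds)"
  by (induction ds) (auto simp: evT_def)

lemma sl0: "sum_list (map (\<lambda>(u, c). (0::'k::field)) ds) = 0"
  by (induction ds) auto

lemma rowP_zero: "rowP (\<lambda>w. 0 :: 'k::field) r"
  by (cases r) (simp add: rowP_def delta_zero sl0)

lemma rowP_add: assumes "rowP p r" "rowP q r" shows "rowP (\<lambda>w. p w + q w :: 'k::field) r"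
proof (cases r)
  case (fields v a ds bs)
  from assms show ?thesis unfolding fields rowP_def prod.case delta_add sl_add by (simp add: algebra_simps)
qed

lemma rowP_smult: assumes "rowP p r" shows "rowP (\<lambda>w. c * p w :: 'k::field) r"
proof (cases r)
  case (fields v a ds bs)
  from assms have "of_int a * p v = sum_list (map (\<lambda>(u, c). of_int c * delta p u) ds) + sum_list (map (\<lambda>(u, c). of_int c * p u) bs)"
    unfolding fields rowP_def prod.case .
  then have "c * (of_int a * p v) = c * (sum_list (map (\<lambda>(u, c). of_int c * delta p u) ds) + sum_list (map (\<lambda>(u, c). of_int c * p u) bs))"
    by simp
  then show ?thesis unfolding fields rowP_def prod.case delta_smult sl_smult by (simp add: algebra_simps)
qed

lemma rowT_rowP: "rowT T (dT T) r \<Longrightarrow> rowP (evT T :: 'k::field ncpoly) r"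
proof (cases r)
  case (fields v a ds bs)
  assume "rowT T (dT T) r"
  then have "a * lk T v = sum_list (map (\<lambda>(u, c). c * lk (dT T) u) ds) + sum_list (map (\<lambda>(u, c). c * lk T u) bs)"
    using fields by (simp add: rowT_def)
  then have "(of_int (a * lk T v) :: 'k) = of_int (sum_list (map (\<lambda>(u, c). c * lk (dT T) u) ds) + sum_list (map (\<lambda>(u, c). c * lk T u) bs))"
    by simp
  then have "of_int a * (evT T v :: 'k) = sum_list (map (\<lambda>(u, c). of_int c * evT (dT T) u) ds) + sum_list (map (\<lambda>(u, c). of_int c * evT T u) bs)"
    unfolding of_int_add of_int_mult sl_of_int by (simp add: evT_def)
  then show ?thesis using fields by (simp add: rowP_def evT_dT)
qed

lemma TF_row: "length t = 5 \<Longrightarrow> list_all (rowP (lbrk (True # False # t) :: 'k::field ncpoly)) CERT"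
proof -
  assume "length t = 5"
  then have "t \<in> set (words 5)" by (simp add: set_words)
  then have "list_all (rowT (lbrkT (True # False # t)) (dT (lbrkT (True # False # t)))) CERT"
    using chk by (simp add: list_all_iff)
  then show ?thesis by (simp add: list_all_iff lbrk_evT rowT_rowP)
qed

lemma spn_rowP: "(g :: 'k::field ncpoly) \<in> spn 7 \<Longrightarrow> list_all (rowP g) CERT"
proof (induction rule: spn.induct)
  case zero then show ?case by (simp add: list_all_iff rowP_zero)
next
  case (add p q) then show ?case by (simp add: list_all_iff rowP_add)
next
  case (smult p c) then show ?case by (simp add: list_all_iff rowP_smult)
next
  case (gen w)
  then obtain a b t where w: "w = a # b # t" and t: "length t = 5"
    by (cases w; cases "tl w") auto
  show ?case
  proof (cases "a = b")
    case True
    have e: "lbrk w = (\<lambda>x. 0 :: 'k)" unfolding w True by (rule lbrk_aa)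
    show ?thesis unfolding e by (simp add: list_all_iff rowP_zero)
  next
    case False
    show ?thesis
    proof (cases a)
      case True
      then have "w = True # False # t" using w False by simp
      then show ?thesis using TF_row[OF t] by simp
    next
      case a: False
      then have w2: "w = False # True # t" using w False by simp
      have e: "lbrk w = (\<lambda>x. (-1) * lbrk (True # False # t) x :: 'k)" unfolding w2 lbrk_xy by simp
      show ?thesis unfolding e list_all_iff
        using TF_row[OF t, unfolded list_all_iff] rowP_smult[of "lbrk (True # False # t)" _ "-1"] by blast
    qed
  qed
qed

lemma homog_nc_mult:
  assumes "homog m p" "homog n q" shows "homog (m + n) (nc_mult p q)"
  unfolding homog_def
proof (intro allI impI)
  fix w assume "nc_mult p q w \<noteq> 0"
  then obtain i where i: "i \<in> {..length w}" and nz: "p (take i w) * q (drop i w) \<noteq> 0"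
    unfolding nc_mult_def by (meson sum.not_neutral_contains_not_neutral)
  from nz have "p (take i w) \<noteq> 0" "q (drop i w) \<noteq> 0" by auto
  then have "length (take i w) = m" "length (drop i w) = n" using assms unfolding homog_def by auto
  then show "length w = m + n" using i by auto
qed

lemma homog_lie_br:
  assumes "homog m p" "homog n q" "k = m + n" shows "homog k (lie_br p q)"
proof -
  have 1: "homog (m + n) (nc_mult p q)" using assms by (intro homog_nc_mult)
  have 2: "homog (m + n) (nc_mult q p)" using homog_nc_mult[OF assms(2,1)] by (simp add: add.commute)
  show ?thesis using 1 2 assms(3) unfolding homog_def lie_br_def by (metis diff_self)
qed

lemma homog_add: "homog n p \<Longrightarrow> homog n q \<Longrightarrow> homog n (\<lambda>w. p w + q w)"
  unfolding homog_def by (metis add.right_neutral)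
lemma homog_diff: "homog n p \<Longrightarrow> homog n q \<Longrightarrow> homog n (\<lambda>w. p w - q w)"
  unfolding homog_def by (metis diff_self)
lemma homog_smult: "homog n p \<Longrightarrow> homog n (\<lambda>w. c * p w)"
  unfolding homog_def by auto
lemma homog_gen_x: "homog 1 gen_x"
  unfolding homog_def gen_x_def by auto
lemma homog_gen_y: "homog 1 gen_y"
  unfolding homog_def gen_y_def by auto

lemma lie_span_diff: "p \<in> lie_span S \<Longrightarrow> q \<in> lie_span S \<Longrightarrow> (\<lambda>w. p w - q w) \<in> lie_span S"
proof -
  assume "p \<in> lie_span S" "q \<in> lie_span S"
  then have "(\<lambda>w. p w + (-1) * q w) \<in> lie_span S" by (intro lie_span.add lie_span.smult)
  then show ?thesis by simp
qed

lemma lie_span_sub: "(\<And>p. p \<in> S \<Longrightarrow> p \<in> lie_span T) \<Longrightarrow> q \<in> lie_span S \<Longrightarrow> q \<in> lie_span T"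
proof -
  assume h: "\<And>p. p \<in> S \<Longrightarrow> p \<in> lie_span T" and q: "q \<in> lie_span S"
  from q show ?thesis
  proof induction
    case (gen p) then show ?case by (rule h)
  qed (auto intro: lie_span.intros)
qed

definition UU :: "'k::field ncpoly" where "UU = lie_br gen_y gen_x"

definition Wel :: "'k::field ncpoly" where
  "Wel = (\<lambda>w. lie_br (lie_br (lie_br (lie_br gen_y gen_x) gen_x) gen_x)
                    (lie_br (lie_br gen_y gen_x) gen_y) w
          - lie_br (lie_br (lie_br (lie_br gen_y gen_x) gen_x) gen_y)
                    (lie_br (lie_br gen_y gen_x) gen_x) w)"

definition s1 :: "'k::field ncpoly" where "s1 = lie_br (lie_br (lie_br (lie_br (lie_br UU gen_x) gen_x) gen_x) gen_x) gen_x"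
definition s2 :: "'k::field ncpoly" where "s2 = lie_br (lie_br (lie_br (lie_br UU gen_x) gen_x) gen_x) UU"
definition s3 :: "'k::field ncpoly" where "s3 = lie_br (lie_br (lie_br UU gen_x) gen_x) (lie_br UU gen_x)"
definition s4 :: "'k::field ncpoly" where "s4 = lie_br (lie_br (lie_br UU gen_x) UU) UU"

abbreviation SS :: "'k::field ncpoly set" where "SS \<equiv> {gen_x, UU, Wel}"

lemma delta_UU: "delta UU = (\<lambda>w. 0)"
  by (simp add: UU_def delta_lie_br delta_gen_x delta_gen_y lie_br_self lie_br_zero_right)

lemma delta_Wel: "delta Wel = (\<lambda>w. 0)"
proof
  fix u
  show "delta Wel u = 0"
    unfolding Wel_def delta_diff
    by (simp add: delta_lie_br delta_gen_x delta_gen_y lie_br_self lie_br_zero_right lie_br_zero_left)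
qed

lemma SS_delta: "q \<in> lie_span SS \<Longrightarrow> delta q = (\<lambda>w. 0)"
  by (rule lie_span_delta) (auto simp: delta_gen_x delta_UU delta_Wel)

lemma UU_SS: "UU \<in> lie_span SS" by (rule lie_span.gen) simp
lemma X_SS: "gen_x \<in> lie_span SS" by (rule lie_span.gen) simp
lemma Wel_SS: "Wel \<in> lie_span SS" by (rule lie_span.gen) simp

lemma s_SS: "s1 \<in> lie_span SS" "s2 \<in> lie_span SS" "s3 \<in> lie_span SS" "s4 \<in> lie_span SS"
  unfolding s1_def s2_def s3_def s4_def
  by (intro lie_span.br UU_SS X_SS)+

lemma SS_free: "q \<in> lie_span SS \<Longrightarrow> q \<in> free_lie"
  unfolding free_lie_def
proof (rule lie_span_sub)
  fix p :: "'a ncpoly" assume "p \<in> SS"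
  have x: "gen_x \<in> lie_span {gen_x, gen_y}" "gen_y \<in> lie_span {gen_x, gen_y}" by (auto intro: lie_span.gen)
  have u: "UU \<in> lie_span {gen_x, gen_y}" unfolding UU_def by (intro lie_span.br x)
  have w: "Wel \<in> lie_span {gen_x, gen_y}" unfolding Wel_def by (intro lie_span_diff lie_span.br x)
  show "p \<in> lie_span {gen_x, gen_y}" using \<open>p \<in> SS\<close> x u w by auto
qed assumption

lemma homog_s: "homog 7 s1" "homog 7 s2" "homog 7 s3" "homog 7 s4" "homog 7 Wel"
proof -
  note hx = homog_gen_x and hy = homog_gen_y
  have hu: "homog 2 UU" unfolding UU_def by (rule homog_lie_br[OF hy hx]) simp
  have h3: "homog 3 (lie_br UU gen_x)" by (rule homog_lie_br[OF hu hx]) simp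
  have h4: "homog 4 (lie_br (lie_br UU gen_x) gen_x)" by (rule homog_lie_br[OF h3 hx]) simp
  have h4': "homog 4 (lie_br (lie_br UU gen_x) gen_y)" by (rule homog_lie_br[OF h3 hy]) simp
  have h3': "homog 3 (lie_br UU gen_y)" by (rule homog_lie_br[OF hu hy]) simp
  have h5: "homog 5 (lie_br (lie_br (lie_br UU gen_x) gen_x) gen_x)" by (rule homog_lie_br[OF h4 hx]) simp
  have h6: "homog 6 (lie_br (lie_br (lie_br (lie_br UU gen_x) gen_x) gen_x) gen_x)" by (rule homog_lie_br[OF h5 hx]) simp
  show "homog 7 s1" unfolding s1_def by (rule homog_lie_br[OF h6 hx]) simp
  show "homog 7 s2" unfolding s2_def by (rule homog_lie_br[OF h5 hu]) simp
  show "homog 7 s3" unfolding s3_def by (rule homog_lie_br[OF h4 h3]) simp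
  have h5': "homog 5 (lie_br (lie_br UU gen_x) UU)" by (rule homog_lie_br[OF h3 hu]) simp
  show "homog 7 s4" unfolding s4_def by (rule homog_lie_br[OF h5' hu]) simp
  have a: "homog 7 (lie_br (lie_br (lie_br UU gen_x) gen_x) (lie_br UU gen_y))" by (rule homog_lie_br[OF h4 h3']) simp
  have b: "homog 7 (lie_br (lie_br (lie_br UU gen_x) gen_y) (lie_br UU gen_x))" by (rule homog_lie_br[OF h4' h3]) simp
  show "homog 7 Wel" unfolding Wel_def using homog_diff[OF a b] by (simp add: UU_def)
qed

definition TU :: tr where "TU = brT (letT True) (letT False)"
definition T1 :: tr where "T1 = brT (brT (brT (brT (brT TU (letT False)) (letT False)) (letT False)) (letT False)) (letT False)"
definition T2 :: tr where "T2 = brT (brT (brT (brT TU (letT False)) (letT False)) (letT False)) TU"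
definition T3 :: tr where "T3 = brT (brT (brT TU (letT False)) (letT False)) (brT TU (letT False))"
definition T4 :: tr where "T4 = brT (brT (brT TU (letT False)) TU) TU"
definition TA :: tr where "TA = brT (brT (brT TU (letT False)) (letT False)) (brT TU (letT True))"
definition TB :: tr where "TB = brT (brT (brT TU (letT False)) (letT True)) (brT TU (letT False))"

lemma UU_evT: "UU = evT TU"
  by (simp only: UU_def TU_def gen_x_evT gen_y_evT evT_brT)

lemma s_evT: "s1 = evT T1" "s2 = evT T2" "s3 = evT T3" "s4 = evT T4" "Wel = (\<lambda>w. evT TA w - evT TB w)"
  by (simp only: s1_def s2_def s3_def s4_def Wel_def T1_def T2_def T3_def T4_def TA_def TB_def
       UU_evT gen_x_evT gen_y_evT evT_brT TU_def)+

definition VJ :: "bool list list" where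
  "VJ = [[False,False,False,False,False,False,True], [False,False,False,False,True,False,True],
         [False,False,False,True,True,False,False], [False,False,False,True,False,True,True],
         [True,False,False,False,True,False,True]]"

lemma vals: "map (\<lambda>T. map (lk T) VJ) [T1, T2, T3, T4, TA, TB] =
  [[1,0,0,0,0],[0,-1,0,0,0],[0,0,-1,0,0],[0,0,0,0,3],[0,0,0,1,2],[0,0,0,0,2]]"
  unfolding T1_def T2_def T3_def T4_def TA_def TB_def TU_def VJ_def by code_simp

lemma cov1: "map fst CERT = words 7"
  by code_simp

lemma cov2: "list_all (\<lambda>(v, a, ds, bs). a \<noteq> 0 \<and> list_all (\<lambda>(u, c). u \<in> set VJ) bs) CERT"
  unfolding VJ_def by code_simp

lemma row_kill:
  assumes "rowP g (v, a, ds, bs)" "delta g = (\<lambda>w. 0)" "\<forall>p\<in>set bs. g (fst p) = 0" "a \<noteq> 0"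
  shows "g v = (0 :: 'k::field_char_0)"
proof -
  have "of_int a * g v = 0"
    using assms(1,2,3) unfolding rowP_def prod.case by (simp add: sl_zero sl0)
  then show ?thesis using assms(4) by simp
qed

lemma main_lemma:
  fixes f :: "'k::field_char_0 ncpoly"
  assumes ff: "f \<in> free_lie" and hf: "homog 7 f"
  shows "delta f = (\<lambda>w. 0) \<longleftrightarrow> f \<in> lie_span SS"
proof
  assume "f \<in> lie_span SS" then show "delta f = (\<lambda>w. 0)" by (rule SS_delta)
next
  assume df: "delta f = (\<lambda>w. 0)"
  define v1 where "v1 = VJ ! 0"
  define v2 where "v2 = VJ ! 1"
  define v3 where "v3 = VJ ! 2"
  define v4 where "v4 = VJ ! 3"
  define v5 where "v5 = VJ ! 4"
  have VJ: "VJ = [v1, v2, v3, v4, v5]" unfolding v1_def v2_def v3_def v4_def v5_def VJ_def by simp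
  have lv: "lk T1 v1 = 1" "lk T1 v2 = 0" "lk T1 v3 = 0" "lk T1 v4 = 0" "lk T1 v5 = 0"
    "lk T2 v1 = 0" "lk T2 v2 = -1" "lk T2 v3 = 0" "lk T2 v4 = 0" "lk T2 v5 = 0"
    "lk T3 v1 = 0" "lk T3 v2 = 0" "lk T3 v3 = -1" "lk T3 v4 = 0" "lk T3 v5 = 0"
    "lk T4 v1 = 0" "lk T4 v2 = 0" "lk T4 v3 = 0" "lk T4 v4 = 0" "lk T4 v5 = 3"
    "lk TA v1 = 0" "lk TA v2 = 0" "lk TA v3 = 0" "lk TA v4 = 1" "lk TA v5 = 2"
    "lk TB v1 = 0" "lk TB v2 = 0" "lk TB v3 = 0" "lk TB v4 = 0" "lk TB v5 = 2"
    using vals unfolding VJ by simp_all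
  define l1 where "l1 = f v1"
  define l2 where "l2 = - f v2"
  define l3 where "l3 = - f v3"
  define l4 where "l4 = f v5 / 3"
  define l5 where "l5 = f v4"
  define P where "P = (\<lambda>w. l1 * s1 w + l2 * s2 w + l3 * s3 w + l4 * s4 w + l5 * Wel w)"
  define g where "g = (\<lambda>w. f w - P w)"
  have PS: "P \<in> lie_span SS"
    unfolding P_def using s_SS Wel_SS by (intro lie_span.add lie_span.smult)
  have gfree: "g \<in> free_lie"
    using ff SS_free[OF PS] unfolding g_def free_lie_def by (rule lie_span_diff)
  have hP: "homog 7 P"
    unfolding P_def using homog_s by (intro homog_add homog_smult)
  have hg: "homog 7 g" unfolding g_def using hf hP by (rule homog_diff)
  have gspn: "g \<in> spn 7"
    using free_lie_spn[of g 7] gfree hg by (simp add: free_lie_def homog_cmp)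
  have dP: "delta P = (\<lambda>w. 0)" by (rule SS_delta[OF PS])
  have dg: "delta g = (\<lambda>w. 0)"
    unfolding g_def by (rule ext) (simp add: delta_diff df dP)
  have sv: "\<And>v. s1 v = of_int (lk T1 v)" "\<And>v. s2 v = of_int (lk T2 v)" "\<And>v. s3 v = of_int (lk T3 v)"
    "\<And>v. s4 v = of_int (lk T4 v)" "\<And>v. Wel v = of_int (lk TA v) - of_int (lk TB v)"
    by (simp_all add: s_evT evT_def)
  have gv: "g v1 = 0" "g v2 = 0" "g v3 = 0" "g v4 = 0" "g v5 = 0"
    unfolding g_def P_def l1_def l2_def l3_def l4_def l5_def sv lv by simp_all
  have rows: "list_all (rowP g) CERT" by (rule spn_rowP[OF gspn])
  have gz: "g v = 0" for v
  proof (cases "length v = 7")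
    case True
    then have "v \<in> set (map fst CERT)" unfolding cov1 set_words by simp
    then obtain a ds bs where r: "(v, a, ds, bs) \<in> set CERT" by auto
    have "a \<noteq> 0 \<and> list_all (\<lambda>(u, c). u \<in> set VJ) bs" using cov2 r by (auto simp: list_all_iff)
    then have a: "a \<noteq> 0" and bs: "\<forall>p\<in>set bs. fst p \<in> set VJ" by (auto simp: list_all_iff)
    have "\<forall>p\<in>set bs. g (fst p) = 0" using bs gv unfolding VJ by auto
    moreover have "rowP g (v, a, ds, bs)" using rows r by (simp add: list_all_iff)
    ultimately show ?thesis using row_kill dg a by blast
  next
    case False then show ?thesis using hg unfolding homog_def by blast
  qed
  have "f = P"
  proof
    fix w show "f w = P w" using gz[of w] unfolding g_def by simp
  qed
  then show "f \<in> lie_span SS" using PS by simp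
qed

theorem proposition5p5:
  fixes f :: "'k::field_char_0 ncpoly"
  assumes "f \<in> free_lie" and "f \<noteq> (\<lambda>w. 0)" and "homog 7 f"
  shows "delta f = (\<lambda>w. 0) \<longleftrightarrow>
    f \<in> lie_span {gen_x, lie_br gen_y gen_x,
      (\<lambda>w. lie_br (lie_br (lie_br (lie_br gen_y gen_x) gen_x) gen_x)
                    (lie_br (lie_br gen_y gen_x) gen_y) w
          - lie_br (lie_br (lie_br (lie_br gen_y gen_x) gen_x) gen_y)
                    (lie_br (lie_br gen_y gen_x) gen_x) w)}"
  using main_lemma[OF assms(1) assms(3)] unfolding UU_def Wel_def .


end
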